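(* Let $X\in\mathbb{R}^{n\times p}$ with $n>p$ and $X^TX$ invertible, let $Y=({\bf y}_1,\dots,{\bf y}_r)\in\mathbb{R}^{n\times r}$ with columns ${\bf y}_c\in\mathbb{R}^n$, let $D=(D_1,\ldots,D_Q)$ be a fixed partition of $\{1,\ldots,r\}$, and let $\gamma\ge 0$ be fixed. Let $\dot{\boldsymbol\beta}_c=(X^TX)^{-1}X^T{\bf y}_c$ be the ordinary least squares estimate for response $c$, $c=1,\dots,r$, and let $\bar B=(\bar{\boldsymbol\beta}_1,\ldots,\bar{\boldsymbol\beta}_r)\in\mathbb{R}^{p\times r}$ be the minimizer over $B=(\boldsymbol\beta_1,\dots,\boldsymbol\beta_r)\in\mathbb{R}^{p\times r}$ of $$\frac{1}{2n}\sum_{i=1}^n\sum_{c=1}^r (y_{ic}-{\bf x}_i^T\boldsymbol\beta_c)^2+\frac{\gamma}{2n}\sum_{q=1}^Q\frac{1}{|D_q|}\sum_{l,m\in D_q}\|X(\boldsymbol\beta_l-\boldsymbol\beta_m)\|_2^2$$ (this is the objective with lasso parameter $\delta=0$). Then for every $q$ and every $l\in D_q$, $$\bar{\boldsymbol\beta}_l=\dot{\boldsymbol\beta}_l+\frac{2\gamma}{(1+2\gamma)|D_q|}\sum_{c\in D_q,\,c\neq l}(\dot{\boldsymbol\beta}_c-\dot{\boldsymbol\beta}_l).$$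
   Context: ${\bf x}_i^T$ denotes the $i$th row of $X$ and $y_{ic}$ the $(i,c)$ entry of $Y$. The inner sum $\sum_{l,m\in D_q}$ runs over all ordered pairs $(l,m)$ with $l,m\in D_q$. Standing assumptions of the paper: the columns of $Y$ and of $X$ are centered ($\sum_i y_{ik}=0$, $\sum_i x_{ij}=0$) and $\sum_i x_{ij}^2\le n$. $|D_q|$ is the cardinality of $D_q$. *)

theory Defs
  imports "HOL-Analysis.Analysis" "HOL-Library.Disjoint_Sets"
begin

text \<open>Design matrix X : n x p (real^'p^'n), responses Y : n x r (real^'r^'n),
  coefficient matrices B : p x r (real^'r^'p); column c of B is beta_c.\<close>

definition ols_est :: "real^'p^'n \<Rightarrow> real^'r^'n \<Rightarrow> 'r \<Rightarrow> real^'p" where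
  "ols_est X Y c = matrix_inv (transpose X ** X) *v (transpose X *v column c Y)"

definition grouped_objective ::
  "real^'p^'n \<Rightarrow> real^'r^'n \<Rightarrow> 'r set set \<Rightarrow> real \<Rightarrow> real^'r^'p \<Rightarrow> real" where
  "grouped_objective X Y D \<gamma> B =
     1 / (2 * real CARD('n)) *
       (\<Sum>i\<in>UNIV. \<Sum>c\<in>UNIV. (Y $ i $ c - (X $ i) \<bullet> column c B)\<^sup>2)
   + \<gamma> / (2 * real CARD('n)) *
       (\<Sum>Dq\<in>D. 1 / real (card Dq) *
          (\<Sum>l\<in>Dq. \<Sum>m\<in>Dq. (norm (X *v (column l B - column m B)))\<^sup>2))"

end

theory Submission
  imports Defs
begin

lemma quad_zero:
  fixes a b c :: real
  assumes c: "c \<ge> 0" and h: "\<And>t. a \<le> a + t*b + t^2*c"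
  shows "b = 0"
proof -
  define t where "t = - b / (2*(c+1))"
  have "0 \<le> t*b + t^2*c" using h[of t] by simp
  hence "0 \<le> (t*b + t^2*c) * (4*(c+1)^2)" using c by simp
  also have "\<dots> = -(b^2 * (c+2))"
  proof -
    have s: "c+1 \<noteq> 0" using c by simp
    have "t * (2*(c+1)) = -b" using s unfolding t_def by simp
    then have bb: "b = -(2*t*(c+1))" by (simp add: algebra_simps)
    show ?thesis unfolding bb by (simp add: power2_eq_square algebra_simps)
  qed
  finally have "b^2 * (c+2) \<le> 0" by simp
  hence "b^2 \<le> 0" using c by (smt (verit) mult_pos_pos zero_le_power2 mult_nonneg_nonneg)
  thus ?thesis by simp
qed

lemma inv_left: fixes A :: "real^'n^'n" assumes "invertible A" shows "matrix_inv A ** A = mat 1"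
  using assms unfolding invertible_def matrix_inv_def by (metis (mono_tags, lifting) someI_ex)

lemma mv_row: "((X::real^'p^'n) *v v) $ i = X $ i \<bullet> v"
  by (simp add: matrix_vector_mult_def inner_vec_def mult.commute)

lemma col_upd: "column c ((\<chi> i j. B $ i $ j + (if j = l then t * h $ i else 0)) :: real^'r^'p)
   = column c B + (if c = l then t else 0) *\<^sub>R h"
  by (simp add: column_def vec_eq_iff)

lemma transp_inner: "(v::real^'n) \<bullet> ((X::real^'p^'n) *v h) = (transpose X *v v) \<bullet> h"
  by (simp add: dot_lmul_matrix)

lemma norm_add_sq: fixes u w :: "real^'n"
  shows "(norm (u + a *\<^sub>R w))^2 = (norm u)^2 + 2*a*(u \<bullet> w) + a^2 * (norm w)^2"
  unfolding power2_norm_eq_inner by (simp add: inner_add_left inner_add_right inner_commute algebra_simps power2_eq_square)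

lemma sum_quad: "(\<Sum>x\<in>A. a x + t*b x + t^2*c x) = sum a A + t * sum b A + t^2*(sum c A::real)"
  by (simp add: sum.distrib sum_distrib_left)

lemma foc:
  fixes X :: "real^'p^'n" and Y :: "real^'r^'n" and D :: "'r set set"
    and \<gamma> :: real and Bbar :: "real^'r^'p"
  assumes part: "partition_on UNIV D"
    and gamma: "\<gamma> \<ge> 0"
    and minimizer: "\<And>B. grouped_objective X Y D \<gamma> Bbar \<le> grouped_objective X Y D \<gamma> B"
    and Dq: "Dq \<in> D" and l: "l \<in> Dq"
  shows "((X *v (column l Bbar + (2*\<gamma>/real (card Dq)) *\<^sub>R (\<Sum>m\<in>Dq. column l Bbar - column m Bbar))) - column l Y) \<bullet> (X *v h) = 0"
proof -
  define \<beta> where "\<beta> = (\<lambda>c. column c Bbar)"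
  define n where "n = real CARD('n)"
  define Bt where "Bt = (\<lambda>t. (\<chi> i j. Bbar $ i $ j + (if j = l then t * h $ i else 0)) :: real^'r^'p)"
  define r where "r = (\<lambda>i c. Y$i$c - X$i \<bullet> \<beta> c)"
  define s where "s = (\<lambda>i. X$i \<bullet> h)"
  define w where "w = X *v h"
  define \<delta> where "\<delta> = (\<lambda>l' m. (if l' = l then 1 else 0) - (if m = l then 1 else 0) :: real)"
  define u where "u = (\<lambda>l' m. X *v (\<beta> l' - \<beta> m))"
  define G where "G = 1/(2*n) * (\<Sum>i\<in>UNIV. \<Sum>c\<in>UNIV. (if c=l then -2 * r i c * s i else 0))
     + \<gamma>/(2*n) * (\<Sum>Dq'\<in>D. 1/real (card Dq') * (\<Sum>l'\<in>Dq'. \<Sum>m\<in>Dq'. 2*\<delta> l' m * (u l' m \<bullet> w)))"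
  define Q where "Q = 1/(2*n) * (\<Sum>i\<in>UNIV. \<Sum>c\<in>UNIV. (if c=l then (s i)^2 else 0))
     + \<gamma>/(2*n) * (\<Sum>Dq'\<in>D. 1/real (card Dq') * (\<Sum>l'\<in>Dq'. \<Sum>m\<in>Dq'. (\<delta> l' m)^2 * (norm w)^2))"
  have S1: "(Y$i$c - X$i \<bullet> column c (Bt t))^2 = (r i c)^2 + t*(if c=l then -2 * r i c * s i else 0) + t^2*(if c=l then (s i)^2 else 0)" for i c t
    unfolding Bt_def col_upd r_def s_def \<beta>_def
    by (cases "c = l") (auto simp: inner_add_right power2_eq_square algebra_simps)
  have S2: "(norm (X *v (column l' (Bt t) - column m (Bt t))))^2 = (norm (u l' m))^2 + t*(2*\<delta> l' m * (u l' m \<bullet> w)) + t^2*((\<delta> l' m)^2 * (norm w)^2)" for l' m t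
  proof -
    have eq: "column l' (Bt t) - column m (Bt t) = (\<beta> l' - \<beta> m) + (t * \<delta> l' m) *\<^sub>R h"
      unfolding Bt_def col_upd \<beta>_def \<delta>_def by (auto simp: algebra_simps)
    have eq2: "X *v (column l' (Bt t) - column m (Bt t)) = u l' m + (t * \<delta> l' m) *\<^sub>R w"
      unfolding u_def w_def eq by (simp only: matrix_vector_right_distrib matrix_vector_mult_scaleR)
    show ?thesis unfolding eq2 norm_add_sq by (simp add: algebra_simps power_mult_distrib)
  qed
  have expand: "grouped_objective X Y D \<gamma> (Bt t) = grouped_objective X Y D \<gamma> Bbar + t*G + t^2*Q" for t
  proof -
    have e0: "Bt 0 = Bbar" unfolding Bt_def by (simp add: vec_eq_iff)
    have "grouped_objective X Y D \<gamma> (Bt t) = 1 / (2 * n) *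
       (\<Sum>i\<in>UNIV. \<Sum>c\<in>UNIV. (r i c)^2 + t*(if c=l then -2 * r i c * s i else 0) + t^2*(if c=l then (s i)^2 else 0))
      + \<gamma> / (2 * n) * (\<Sum>Dq\<in>D. 1 / real (card Dq) *
          (\<Sum>l'\<in>Dq. \<Sum>m\<in>Dq. (norm (u l' m))^2 + t*(2*\<delta> l' m * (u l' m \<bullet> w)) + t^2*((\<delta> l' m)^2 * (norm w)^2)))"
      unfolding grouped_objective_def n_def S1 S2 ..
    also have "\<dots> = 1 / (2 * n) *
       ((\<Sum>i\<in>UNIV. \<Sum>c\<in>UNIV. (r i c)^2) + t*(\<Sum>i\<in>UNIV. \<Sum>c\<in>UNIV. (if c=l then -2 * r i c * s i else 0)) + t^2*(\<Sum>i\<in>UNIV. \<Sum>c\<in>UNIV. (if c=l then (s i)^2 else 0)))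
      + \<gamma> / (2 * n) * ((\<Sum>Dq\<in>D. 1 / real (card Dq) * (\<Sum>l'\<in>Dq. \<Sum>m\<in>Dq. (norm (u l' m))^2))
         + t * (\<Sum>Dq\<in>D. 1 / real (card Dq) * (\<Sum>l'\<in>Dq. \<Sum>m\<in>Dq. 2*\<delta> l' m * (u l' m \<bullet> w)))
         + t^2 * (\<Sum>Dq\<in>D. 1 / real (card Dq) * (\<Sum>l'\<in>Dq. \<Sum>m\<in>Dq. (\<delta> l' m)^2 * (norm w)^2)))"
      by (simp only: sum_quad distrib_left sum.distrib sum_distrib_left mult.assoc mult.left_commute[of t] mult.left_commute[of "t^2"])
    also have "\<dots> = 1 / (2 * n) * (\<Sum>i\<in>UNIV. \<Sum>c\<in>UNIV. (r i c)^2) + \<gamma> / (2 * n) * (\<Sum>Dq\<in>D. 1 / real (card Dq) * (\<Sum>l'\<in>Dq. \<Sum>m\<in>Dq. (norm (u l' m))^2)) + t*G + t^2*Q"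
      unfolding G_def Q_def by (simp add: algebra_simps)
    also have "1 / (2 * n) * (\<Sum>i\<in>UNIV. \<Sum>c\<in>UNIV. (r i c)^2) + \<gamma> / (2 * n) * (\<Sum>Dq\<in>D. 1 / real (card Dq) * (\<Sum>l'\<in>Dq. \<Sum>m\<in>Dq. (norm (u l' m))^2)) = grouped_objective X Y D \<gamma> Bbar"
      unfolding grouped_objective_def n_def r_def u_def \<beta>_def ..
    finally show ?thesis .
  qed
  have Qnn: "Q \<ge> 0" unfolding Q_def n_def using gamma
    by (intro add_nonneg_nonneg mult_nonneg_nonneg sum_nonneg) auto
  have G0: "G = 0"
    by (rule quad_zero[OF Qnn, of "grouped_objective X Y D \<gamma> Bbar"]) (metis minimizer expand)
  have finD: "finite D"
    using partition_onD1[OF part] by (metis finite_UnionD finite)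
  have disj: "\<And>Dq'. Dq' \<in> D \<Longrightarrow> Dq' \<noteq> Dq \<Longrightarrow> l \<notin> Dq'"
    using partition_onD2[OF part] Dq l by (metis disjointD disjoint_iff)
  define k where "k = real (card Dq)"
  define z where "z = \<beta> l + (2*\<gamma>/k) *\<^sub>R (\<Sum>m\<in>Dq. \<beta> l - \<beta> m)"
  have A: "(\<Sum>i\<in>UNIV. \<Sum>c\<in>UNIV. (if c=l then -2 * r i c * s i else 0)) = -2 * ((column l Y - X *v \<beta> l) \<bullet> w)"
  proof -
    have c1: "(column l Y - X *v \<beta> l) $ i = r i l" for i by (simp add: r_def mv_row column_def)
    have c2: "w $ i = s i" for i by (simp add: s_def w_def mv_row)
    show ?thesis unfolding inner_vec_def c1 c2
      by (simp add: sum.delta' sum_distrib_left algebra_simps cong: if_cong)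
  qed
  have B0: "(\<Sum>l'\<in>Dq'. \<Sum>m\<in>Dq'. 2*\<delta> l' m * (u l' m \<bullet> w)) = 0" if "l \<notin> Dq'" for Dq'
    using that unfolding \<delta>_def by (intro sum.neutral ballI) auto
  have uneg: "u l' l = - u l l'" for l'
    unfolding u_def by (metis matrix_vector_mult_diff_distrib minus_diff_eq)
  have B1: "(\<Sum>l'\<in>Dq. \<Sum>m\<in>Dq. 2*\<delta> l' m * (u l' m \<bullet> w)) = 4 * (\<Sum>m\<in>Dq. u l m \<bullet> w)"
  proof -
    have "(\<Sum>l'\<in>Dq. \<Sum>m\<in>Dq. 2*\<delta> l' m * (u l' m \<bullet> w)) =
        2 * (\<Sum>l'\<in>Dq. \<Sum>m\<in>Dq. (if l' = l then u l' m \<bullet> w else 0)) - 2 * (\<Sum>l'\<in>Dq. \<Sum>m\<in>Dq. (if m = l then u l' m \<bullet> w else 0))"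
    proof -
      have pw: "2*\<delta> l' m * (u l' m \<bullet> w) = 2 * (if l' = l then u l' m \<bullet> w else 0) - 2 * (if m = l then u l' m \<bullet> w else 0)" for l' m
        unfolding \<delta>_def by auto
      show ?thesis unfolding pw by (simp only: sum_subtractf sum_distrib_left)
    qed
    also have "\<dots> = 2 * (\<Sum>m\<in>Dq. u l m \<bullet> w) - 2 * (\<Sum>l'\<in>Dq. u l' l \<bullet> w)"
    proof -
      have "(\<Sum>l'\<in>Dq. \<Sum>m\<in>Dq. (if l' = l then u l' m \<bullet> w else 0)) = (\<Sum>l'\<in>Dq. if l' = l then (\<Sum>m\<in>Dq. u l' m \<bullet> w) else 0)"
        by (intro sum.cong) auto
      then show ?thesis using l by (simp add: sum.delta sum.delta')
    qed
    also have "\<dots> = 4 * (\<Sum>m\<in>Dq. u l m \<bullet> w)"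
      by (simp add: uneg sum_negf)
    finally show ?thesis .
  qed
  have Gs: "(\<Sum>Dq'\<in>D. 1/real (card Dq') * (\<Sum>l'\<in>Dq'. \<Sum>m\<in>Dq'. 2*\<delta> l' m * (u l' m \<bullet> w))) = 1/k * (4 * (\<Sum>m\<in>Dq. u l m \<bullet> w))"
  proof -
    have "(\<Sum>Dq'\<in>D. 1/real (card Dq') * (\<Sum>l'\<in>Dq'. \<Sum>m\<in>Dq'. 2*\<delta> l' m * (u l' m \<bullet> w)))
      = 1/real (card Dq) * (\<Sum>l'\<in>Dq. \<Sum>m\<in>Dq. 2*\<delta> l' m * (u l' m \<bullet> w))
        + (\<Sum>Dq'\<in>D - {Dq}. 1/real (card Dq') * (\<Sum>l'\<in>Dq'. \<Sum>m\<in>Dq'. 2*\<delta> l' m * (u l' m \<bullet> w)))"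
      using finD Dq by (simp add: sum.remove)
    also have "(\<Sum>Dq'\<in>D - {Dq}. 1/real (card Dq') * (\<Sum>l'\<in>Dq'. \<Sum>m\<in>Dq'. 2*\<delta> l' m * (u l' m \<bullet> w))) = 0"
      using B0 disj by (intro sum.neutral ballI) auto
    finally show ?thesis using B1 k_def by simp
  qed
  have Xz: "X *v z = X *v \<beta> l + (2*\<gamma>/k) *\<^sub>R (\<Sum>m\<in>Dq. u l m)"
    unfolding z_def u_def
    by (simp add: matrix_vector_right_distrib matrix_vector_mult_scaleR linear_sum[OF matrix_vector_mul_linear])
  have kpos: "k > 0" unfolding k_def using l by (auto simp add: card_gt_0_iff)
  have npos: "n > 0" unfolding n_def by simp
  have "G = 1/n * ((X *v z - column l Y) \<bullet> w)"
    unfolding G_def A Gs Xz using kpos npos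
    by (simp add: inner_add_left inner_diff_left inner_sum_left field_simps)
  hence "(X *v z - column l Y) \<bullet> (X *v h) = 0"
    using G0 unfolding n_def w_def by simp
  thus ?thesis unfolding z_def \<beta>_def k_def .
qed

lemma final_alg:
  fixes b pp :: "'r \<Rightarrow> real"
  assumes fin: "finite Dq" and l: "l \<in> Dq" and g: "\<gamma> \<ge> 0"
    and key: "\<And>l. l \<in> Dq \<Longrightarrow> b l + (2*\<gamma>/real (card Dq)) * (\<Sum>m\<in>Dq. b l - b m) = pp l"
  shows "b l = pp l + (2 * \<gamma> / ((1 + 2 * \<gamma>) * real (card Dq))) * (\<Sum>c\<in>Dq - {l}. pp c - pp l)"
proof -
  define k where "k = real (card Dq)"
  have kpos: "k > 0" unfolding k_def using l fin by (auto simp add: card_gt_0_iff)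
  have sb: "(\<Sum>m\<in>Dq. b l' - b m) = k * b l' - sum b Dq" for l'
    by (simp add: sum_subtractf k_def)
  have key': "b l' + (2*\<gamma>/k) * (k * b l' - sum b Dq) = pp l'" if "l' \<in> Dq" for l'
    using key[OF that] sb unfolding k_def by simp
  have "sum pp Dq = (\<Sum>l'\<in>Dq. b l' + (2*\<gamma>/k) * (k * b l' - sum b Dq))"
    using key' by (intro sum.cong) auto
  also have "\<dots> = sum b Dq + (2*\<gamma>/k) * (k * sum b Dq - k * sum b Dq)"
  proof -
    have "(\<Sum>l'\<in>Dq. (2*\<gamma>/k) * (k * b l' - sum b Dq)) = (2*\<gamma>/k) * (\<Sum>l'\<in>Dq. k * b l' - sum b Dq)"
      by (simp only: sum_distrib_left)
    also have "(\<Sum>l'\<in>Dq. k * b l' - sum b Dq) = k * sum b Dq - k * sum b Dq"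
      by (simp add: sum_subtractf k_def flip: sum_distrib_left)
    finally show ?thesis by (simp add: sum.distrib)
  qed
  finally have ss: "sum pp Dq = sum b Dq" by simp
  have so: "(\<Sum>c\<in>Dq - {l}. pp c - pp l) = sum pp Dq - k * pp l"
  proof -
    have "(\<Sum>c\<in>Dq - {l}. pp c - pp l) = (\<Sum>c\<in>Dq. pp c - pp l)"
      using fin l by (simp add: sum.remove)
    thus ?thesis by (simp add: sum_subtractf k_def)
  qed
  have e: "b l + (2*\<gamma>/k) * (k * b l - sum pp Dq) = pp l" using key'[OF l] ss by simp
  have g1: "1 + 2*\<gamma> > 0" using g by simp
  have e2: "(1+2*\<gamma>) * b l = pp l + (2*\<gamma>/k) * sum pp Dq"
    using e kpos by (simp add: algebra_simps)
  have e3: "b l = (pp l + (2*\<gamma>/k) * sum pp Dq) / (1+2*\<gamma>)"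
    using e2 g1 by (simp add: field_simps)
  have "pp l + (2 * \<gamma> / ((1 + 2 * \<gamma>) * k)) * (sum pp Dq - k * pp l) = (pp l + (2*\<gamma>/k) * sum pp Dq) / (1+2*\<gamma>)"
  proof -
    have nz: "k + \<gamma>*(k*2) \<noteq> 0" using kpos g1 mult_pos_pos[OF kpos g1] by (simp add: algebra_simps)
    show ?thesis using kpos g1 nz by (simp add: field_simps)
  qed
  then show ?thesis unfolding so k_def[symmetric] using e3 by simp
qed

theorem theorem1:
  fixes X :: "real^'p^'n" and Y :: "real^'r^'n" and D :: "'r set set"
    and \<gamma> :: real and Bbar :: "real^'r^'p"
  assumes n_gt_p: "CARD('n) > CARD('p)"
    and inv: "invertible (transpose X ** X)"
    and Y_centered: "\<And>k. (\<Sum>i\<in>UNIV. Y $ i $ k) = 0"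
    and X_centered: "\<And>j. (\<Sum>i\<in>UNIV. X $ i $ j) = 0"
    and X_scaled: "\<And>j. (\<Sum>i\<in>UNIV. (X $ i $ j)\<^sup>2) \<le> real CARD('n)"
    and part: "partition_on UNIV D"
    and gamma: "\<gamma> \<ge> 0"
    and minimizer: "\<And>B. grouped_objective X Y D \<gamma> Bbar \<le> grouped_objective X Y D \<gamma> B"
  shows "\<forall>Dq\<in>D. \<forall>l\<in>Dq. column l Bbar =
           ols_est X Y l + (2 * \<gamma> / ((1 + 2 * \<gamma>) * real (card Dq))) *\<^sub>R
             (\<Sum>c\<in>Dq - {l}. ols_est X Y c - ols_est X Y l)"
proof (intro ballI)
  fix Dq l assume Dq: "Dq \<in> D" and l: "l \<in> Dq"
  define \<beta> where "\<beta> = (\<lambda>c. column c Bbar)"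
  have key: "\<beta> l' + (2*\<gamma>/real (card Dq)) *\<^sub>R (\<Sum>m\<in>Dq. \<beta> l' - \<beta> m) = ols_est X Y l'" if l': "l' \<in> Dq" for l'
  proof -
    define z where "z = \<beta> l' + (2*\<gamma>/real (card Dq)) *\<^sub>R (\<Sum>m\<in>Dq. \<beta> l' - \<beta> m)"
    define v where "v = X *v z - column l' Y"
    have "v \<bullet> (X *v (transpose X *v v)) = 0"
      using foc[OF part gamma minimizer Dq l', of "transpose X *v v"] unfolding v_def z_def \<beta>_def .
    hence "transpose X *v v = 0" by (metis transp_inner inner_eq_zero_iff)
    hence "transpose X *v (X *v z) = transpose X *v column l' Y"
      unfolding v_def by (simp add: matrix_vector_mult_diff_distrib)
    hence "(transpose X ** X) *v z = transpose X *v column l' Y"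
      by (simp add: matrix_vector_mul_assoc)
    hence "matrix_inv (transpose X ** X) *v ((transpose X ** X) *v z) = ols_est X Y l'"
      unfolding ols_est_def by simp
    hence "z = ols_est X Y l'"
      by (simp add: matrix_vector_mul_assoc inv_left[OF inv])
    thus ?thesis unfolding z_def .
  qed
  show "column l Bbar = ols_est X Y l + (2 * \<gamma> / ((1 + 2 * \<gamma>) * real (card Dq))) *\<^sub>R
             (\<Sum>c\<in>Dq - {l}. ols_est X Y c - ols_est X Y l)"
  proof (subst vec_eq_iff, intro allI)
    fix j
    have "(\<beta> l) $ j = (ols_est X Y l) $ j + (2 * \<gamma> / ((1 + 2 * \<gamma>) * real (card Dq))) * (\<Sum>c\<in>Dq - {l}. (ols_est X Y c) $ j - (ols_est X Y l) $ j)"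
    proof (rule final_alg[OF _ l gamma])
      show "finite Dq" by simp
      fix l' assume "l' \<in> Dq"
      from arg_cong[OF key[OF this], of "\<lambda>x. x $ j"]
      show "\<beta> l' $ j + (2*\<gamma>/real (card Dq)) * (\<Sum>m\<in>Dq. \<beta> l' $ j - \<beta> m $ j) = ols_est X Y l' $ j"
        by (simp add: sum_component)
    qed
    thus "column l Bbar $ j = (ols_est X Y l + (2 * \<gamma> / ((1 + 2 * \<gamma>) * real (card Dq))) *\<^sub>R
             (\<Sum>c\<in>Dq - {l}. ols_est X Y c - ols_est X Y l)) $ j"
      unfolding \<beta>_def by (simp add: sum_component)
  qed
qed

end
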